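(* Let $\mathcal X=\{1,\dots,N\}$, let $m>0$, and let $p,w$ be probability distributions on $\mathcal X$ with $p(x)\ge m$ and $w(x)\ge m$ for all $x\in\mathcal X$. Then for every probability distribution $v$ on $\mathcal X$, \[ D(w\parallel p)-D(v\parallel p)\le \log\frac1m\cdot\lVert w-v\rVert . \]
   Context: All logarithms are natural. For distributions $q,r$ on $\mathcal X$ with $r(x)>0$ for all $x$, $D(q\parallel r)=\sum_{x:\,q(x)>0}q(x)\log\frac{q(x)}{r(x)}$. For distributions $p,q$, $\lVert p-q\rVert=\sum_{x\in\mathcal X}|p(x)-q(x)|$. *)

theory Defs
  imports Complex_Main
begin

definition is_distr :: "nat \<Rightarrow> (nat \<Rightarrow> real) \<Rightarrow> bool" where
  "is_distr N q \<longleftrightarrow> (\<forall>x\<in>{1..N}. q x \<ge> 0) \<and> (\<Sum>x=1..N. q x) = 1"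

definition KL :: "nat \<Rightarrow> (nat \<Rightarrow> real) \<Rightarrow> (nat \<Rightarrow> real) \<Rightarrow> real" where
  "KL N q r = (\<Sum>x\<in>{x\<in>{1..N}. q x > 0}. q x * ln (q x / r x))"

definition l1dist :: "nat \<Rightarrow> (nat \<Rightarrow> real) \<Rightarrow> (nat \<Rightarrow> real) \<Rightarrow> real" where
  "l1dist N p q = (\<Sum>x=1..N. \<bar>p x - q x\<bar>)"

end

theory Submission
  imports Defs
begin

lemma le_one_distr:
  assumes "is_distr N q" "x \<in> {1..N}"
  shows "q x \<le> 1"
proof -
  have "q x \<le> (\<Sum>y=1..N. q y)"
    using assms by (intro member_le_sum) (auto simp: is_distr_def)
  thus ?thesis using assms by (simp add: is_distr_def)
qed

lemma pointwise:
  fixes v w p L :: real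
  assumes "v \<ge> 0" "w > 0" "p > 0" "L = ln (w / p)"
  shows "w * L - (if v > 0 then v * ln (v / p) else 0) \<le> (w - v) * L + (w - v)"
proof (cases "v > 0")
  case True
  have "ln (v / p) = ln (v / w) + L" using True assms by (simp add: ln_div)
  moreover have lnle: "ln (w / v) \<le> w / v - 1" using True assms by (intro ln_le_minus_one) auto
  have "v * ln (w / v) \<le> w - v"
  proof -
    have "v * ln (w / v) \<le> v * (w / v - 1)" using True lnle by (intro mult_left_mono) auto
    also have "\<dots> = w - v" using True by (simp add: field_simps)
    finally show ?thesis .
  qed
  moreover have "ln (v / w) = - ln (w / v)" using True assms by (simp add: ln_div)
  ultimately have "ln (v / p) = L - ln (w / v)" by linarith
  hence "v * ln (v / p) = v * (L - ln (w / v))" by simp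
  also have "\<dots> = v * L - v * ln (w / v)" by (rule right_diff_distrib)
  finally have "v * ln (v / p) = v * L - v * ln (w / v)" .
  with \<open>v * ln (w / v) \<le> w - v\<close> True show ?thesis by (simp add: algebra_simps)
next
  case False
  thus ?thesis using assms by (simp add: algebra_simps)
qed

theorem lemma3:
  fixes N :: nat and m :: real and p w v :: "nat \<Rightarrow> real"
  assumes "m > 0"
    and "is_distr N p" and "is_distr N w"
    and "\<forall>x\<in>{1..N}. p x \<ge> m" and "\<forall>x\<in>{1..N}. w x \<ge> m"
    and "is_distr N v"
  shows "KL N w p - KL N v p \<le> ln (1 / m) * l1dist N w v"
proof -
  define L where "L x = ln (w x / p x)" for x
  define f where "f x = (if v x > 0 then v x * ln (v x / p x) else 0)" for x
  have KLv: "KL N v p = (\<Sum>x=1..N. f x)"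
    unfolding KL_def f_def by (simp add: sum.inter_filter[symmetric] Collect_conj_eq Int_commute)
  have KLw: "KL N w p = (\<Sum>x=1..N. w x * L x)"
  proof -
    have "{x\<in>{1..N}. w x > 0} = {1..N}" using assms(1,5) by force
    thus ?thesis unfolding KL_def L_def by simp
  qed
  have pt: "w x * L x - f x \<le> (w x - v x) * L x + (w x - v x)" if "x \<in> {1..N}" for x
  proof -
    have "v x \<ge> 0" using assms(6) that by (simp add: is_distr_def)
    moreover have "w x > 0" using assms(1,5) that by force
    moreover have "p x > 0" using assms(1,4) that by force
    ultimately show ?thesis unfolding f_def using pointwise[of "v x" "w x" "p x" "L x"] by (simp add: L_def)
  qed
  have bnd: "(w x - v x) * L x \<le> \<bar>w x - v x\<bar> * ln (1 / m)" if x: "x \<in> {1..N}" for x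
  proof -
    have wx: "m \<le> w x" "w x \<le> 1" and px: "m \<le> p x" "p x \<le> 1"
      using assms x le_one_distr by auto
    have "L x = ln (w x) - ln (p x)" unfolding L_def using wx px assms(1) by (simp add: ln_div)
    moreover have "ln m \<le> ln (w x)" "ln (w x) \<le> 0" "ln m \<le> ln (p x)" "ln (p x) \<le> 0"
      using wx px assms(1) by auto
    ultimately have "\<bar>L x\<bar> \<le> ln (1 / m)" using assms(1) by (simp add: ln_div)
    have "(w x - v x) * L x \<le> \<bar>(w x - v x) * L x\<bar>" by (rule abs_ge_self)
    also have "\<dots> = \<bar>w x - v x\<bar> * \<bar>L x\<bar>" by (rule abs_mult)
    also have "\<dots> \<le> \<bar>w x - v x\<bar> * ln (1 / m)" using \<open>\<bar>L x\<bar> \<le> ln (1 / m)\<close> by (rule mult_left_mono) simp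
    finally show ?thesis .
  qed
  have "KL N w p - KL N v p = (\<Sum>x=1..N. w x * L x - f x)"
    by (simp add: KLv KLw sum_subtractf)
  also have "\<dots> \<le> (\<Sum>x=1..N. (w x - v x) * L x + (w x - v x))"
    by (rule sum_mono) (use pt in auto)
  also have "\<dots> = (\<Sum>x=1..N. (w x - v x) * L x)"
    using assms(3,6) by (simp add: sum.distrib sum_subtractf is_distr_def)
  also have "\<dots> \<le> (\<Sum>x=1..N. \<bar>w x - v x\<bar> * ln (1 / m))"
    by (rule sum_mono) (use bnd in auto)
  also have "\<dots> = ln (1 / m) * l1dist N w v"
    unfolding l1dist_def sum_distrib_left by (simp add: mult.commute)
  finally show ?thesis .
qed

end
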